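(* Let $a\ge 2$ be an integer. Then there are no integers $n\ge 0$ and $c$ such that $B_{n+a}(t)-B_n(t)=c$ as polynomials in $t$.
   Context: The Stern polynomials $B_n(t)\in\mathbb{Z}[t]$, $n\ge 0$, are defined by $B_0(t)=0$, $B_1(t)=1$, $B_{2n}(t)=tB_n(t)$ and $B_{2n+1}(t)=B_n(t)+B_{n+1}(t)$ for $n\ge 1$. *)

theory Defs
  imports "HOL-Computational_Algebra.Polynomial"
begin

function stern_poly :: "nat \<Rightarrow> int poly" where
  "stern_poly n =
     (if n = 0 then 0
      else if n = 1 then 1
      else if even n then [:0, 1:] * stern_poly (n div 2)
      else stern_poly (n div 2) + stern_poly (n div 2 + 1))"
  by auto
termination
  by (relation "measure id") (auto elim!: oddE)

declare stern_poly.simps [simp del]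

lemma stern_poly_0: "stern_poly 0 = 0"
  by (simp add: stern_poly.simps)

lemma stern_poly_1: "stern_poly 1 = 1"
  by (simp add: stern_poly.simps)

lemma stern_poly_even: "n \<ge> 1 \<Longrightarrow> stern_poly (2 * n) = [:0, 1:] * stern_poly n"
  by (subst stern_poly.simps) auto

lemma stern_poly_odd: "n \<ge> 1 \<Longrightarrow> stern_poly (2 * n + 1) = stern_poly n + stern_poly (n + 1)"
  by (subst stern_poly.simps) auto

end

theory Submission
  imports Defs
begin

lemma stern_at2: "poly (stern_poly n) 2 = int n"
proof (induction n rule: less_induct)
  case (less n)
  show ?case
  proof (cases "n = 0 \<or> n = 1")
    case True thus ?thesis using stern_poly_0 stern_poly_1 by (elim disjE) simp_all
  next
    case False
    then obtain m where m: "m \<ge> 1" "n = 2*m \<or> n = 2*m+1"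
      by (metis One_nat_def add_0 dvd_mult_div_cancel even_add less_one nat_less_le
          odd_two_times_div_two_succ one_add_one mult_eq_0_iff not_less zero_neq_numeral le_add1
          linorder_neqE_nat div_less)
    show ?thesis
    proof (cases "n = 2*m")
      case True
      with m less[of m] show ?thesis by (simp add: stern_poly_even)
    next
      case False
      with m have n: "n = 2*m+1" by auto
      have e: "stern_poly n = stern_poly m + stern_poly (m+1)" using stern_poly_odd[OF m(1)] n by simp
      have "m < n" "m+1 < n" using n m by auto
      hence "poly (stern_poly m) 2 = int m" "poly (stern_poly (m+1)) 2 = int (m+1)" using less by auto
      hence "poly (stern_poly n) 2 = int m + int (m+1)" by (simp only: e poly_add)
      thus ?thesis using n by simp
    qed
  qed
qed

lemma stern_at0: "poly (stern_poly n) 0 = (if odd n then 1 else 0)"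
proof (induction n rule: less_induct)
  case (less n)
  show ?case
  proof (cases "n = 0 \<or> n = 1")
    case True thus ?thesis using stern_poly_0 stern_poly_1 by (elim disjE) simp_all
  next
    case False
    then obtain m where m: "m \<ge> 1" "n = 2*m \<or> n = 2*m+1"
      by (metis One_nat_def add_0 dvd_mult_div_cancel even_add less_one nat_less_le
          odd_two_times_div_two_succ one_add_one mult_eq_0_iff not_less zero_neq_numeral le_add1
          linorder_neqE_nat div_less)
    show ?thesis
    proof (cases "n = 2*m")
      case True
      with m less[of m] show ?thesis by (simp add: stern_poly_even)
    next
      case False
      with m have n: "n = 2*m+1" by auto
      have e: "stern_poly n = stern_poly m + stern_poly (m+1)" using stern_poly_odd[OF m(1)] n by simp
      have "m < n" "m+1 < n" using n m by auto
      hence h1: "poly (stern_poly m) 0 = (if odd m then 1 else 0)" "poly (stern_poly (m+1)) 0 = (if odd (m+1) then 1 else 0)" using less by auto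
      have "poly (stern_poly n) 0 = (if odd m then 1 else 0) + (if odd (m+1) then 1 else 0)" by (simp only: e poly_add h1)
      thus ?thesis using n by auto
    qed
  qed
qed

theorem corollary5p3:
  fixes a :: nat
  assumes "a \<ge> 2"
  shows "\<not> (\<exists>(n::nat) (c::int). stern_poly (n + a) - stern_poly n = [:c:])"
proof
  assume "\<exists>(n::nat) (c::int). stern_poly (n + a) - stern_poly n = [:c:]"
  then obtain n c where h: "stern_poly (n + a) - stern_poly n = [:c:]" by blast
  have "poly (stern_poly (n + a) - stern_poly n) 2 = c" using h by simp
  hence c: "c = int a" by (simp add: stern_at2)
  have "poly (stern_poly (n + a) - stern_poly n) 0 = c" using h by simp
  hence "c = (if odd (n+a) then 1 else 0) - (if odd n then 1 else 0)" by (simp add: stern_at0)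
  hence "c \<le> 1" by (auto split: if_splits)
  with c assms show False by simp
qed

end
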